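(* Let $q_1,q_2,\dots$ be probabilities with $\sum_iq_i=1$ and let $\mathcal{M}=\sum_iq_i\mathcal{M}_i$ be the mechanism that runs $\mathcal{M}_i$ with probability $q_i$. Fix data sets $d,d'$ and suppose $T(\mathcal{M}_i(d),\mathcal{M}_i(d'))\ge f_i$ for trade-off functions with $f_1\le f_2\le f_3\le\cdots$ pointwise. Let $f(\alpha)=\inf\{\sum_iq_if_i(\alpha_i):\alpha_i\in[0,1],\ \sum_iq_i\alpha_i=\alpha\}$ and, for an index $t$, $p_t=\sum_{i<t}q_i$. Then for all $\alpha\in[0,1]$, $$T(\mathcal{M}(d),\mathcal{M}(d'))(\alpha)\ge f(\alpha)\ge f_t(\min\{1,\alpha+p_t\}).$$
   Context: For distributions $P,Q$ on a common space, $T(P,Q)(\alpha)=\inf_\phi\{1-\mathbb{E}_Q[\phi]:\mathbb{E}_P[\phi]\le\alpha\}$, infimum over measurable $\phi$ with values in $[0,1]$. A trade-off function is a convex, continuous, non-increasing $f:[0,1]\to[0,1]$ with $f(\alpha)\le1-\alpha$. The mixture mechanism outputs $\mathcal{M}(d)=\sum_iq_i\mathcal{M}_i(d)$ (the index $i$ is not revealed). *)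

theory Defs
  imports "HOL-Probability.Probability"
begin

definition tradeoff :: "'a measure \<Rightarrow> 'a measure \<Rightarrow> real \<Rightarrow> real" where
  "tradeoff P Q \<alpha> = Inf ((\<lambda>\<phi>. 1 - (\<integral>x. \<phi> x \<partial>Q)) `
     {\<phi> \<in> borel_measurable P. (\<forall>x\<in>space P. 0 \<le> \<phi> x \<and> \<phi> x \<le> 1) \<and> (\<integral>x. \<phi> x \<partial>P) \<le> \<alpha>})"

definition is_tradeoff_fun :: "(real \<Rightarrow> real) \<Rightarrow> bool" where
  "is_tradeoff_fun f \<longleftrightarrow>
     convex_on {0..1} f \<and> continuous_on {0..1} f \<and>
     (\<forall>x\<in>{0..1}. \<forall>y\<in>{0..1}. x \<le> y \<longrightarrow> f y \<le> f x) \<and>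
     (\<forall>x\<in>{0..1}. 0 \<le> f x \<and> f x \<le> 1 \<and> f x \<le> 1 - x)"

definition mixture :: "'a measure \<Rightarrow> (nat \<Rightarrow> real) \<Rightarrow> (nat \<Rightarrow> 'a measure) \<Rightarrow> 'a measure" where
  "mixture N q P = measure_of (space N) (sets N) (\<lambda>A. \<Sum>i. ennreal (q i) * emeasure (P i) A)"

definition mix_lower :: "(nat \<Rightarrow> real) \<Rightarrow> (nat \<Rightarrow> real \<Rightarrow> real) \<Rightarrow> real \<Rightarrow> real" where
  "mix_lower q f \<alpha> = Inf {(\<Sum>i. q i * f i (a i)) | a.
       (\<forall>i. a i \<in> {0..1}) \<and> (\<Sum>i. q i * a i) = \<alpha>}"

end

theory Submission imports Defs begin

lemma mixture_bind:
  fixes q :: "nat \<Rightarrow> real"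
  assumes qn: "\<And>i. 0 \<le> q i" and pr: "\<And>i. prob_space (P i)" and st: "\<And>i. sets (P i) = sets N"
  shows "mixture N q P = bind (density (count_space UNIV) (\<lambda>i. ennreal (q i))) P"
proof -
  define B where "B = density (count_space UNIV) (\<lambda>i. ennreal (q i))"
  have spB: "space B = UNIV" by (simp add: B_def)
  have meas: "P \<in> measurable B (subprob_algebra N)"
  proof -
    have "P \<in> measurable (count_space UNIV) (subprob_algebra N)"
      using pr st by (auto simp: space_subprob_algebra prob_space_imp_subprob_space)
    then show ?thesis unfolding B_def by (simp add: measurable_cong_sets)
  qed
  have sbind: "sets (bind B P) = sets N"
    using st spB by (intro sets_bind) auto
  have spbind: "space (bind B P) = space N"
    using sbind by (rule sets_eq_imp_space_eq)
  have em: "emeasure (bind B P) A = (\<Sum>i. ennreal (q i) * emeasure (P i) A)" if A: "A \<in> sets N" for A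
  proof -
    have "emeasure (bind B P) A = (\<integral>\<^sup>+i. emeasure (P i) A \<partial>B)"
      using spB meas A by (intro emeasure_bind) auto
    also have "\<dots> = (\<integral>\<^sup>+i. ennreal (q i) * emeasure (P i) A \<partial>count_space UNIV)"
      unfolding B_def by (subst nn_integral_density) auto
    also have "\<dots> = (\<Sum>i. ennreal (q i) * emeasure (P i) A)"
      by (rule nn_integral_count_space_nat)
    finally show ?thesis .
  qed
  have "mixture N q P = measure_of (space N) (sets N) (emeasure (bind B P))"
    unfolding mixture_def
    by (rule measure_of_eq) (auto simp: em sets.space_closed sets.sigma_sets_eq)
  also have "\<dots> = bind B P"
    using measure_of_of_measure[of "bind B P"] by (simp add: sbind spbind)
  finally show ?thesis unfolding B_def .
qed

lemma comp_int:
  assumes pr: "prob_space P" and st: "sets P = sets N"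
    and phm: "\<phi> \<in> borel_measurable N" and b: "\<forall>x\<in>space N. 0 \<le> \<phi> x \<and> \<phi> x \<le> (1::real)"
  shows "integrable P \<phi>" "0 \<le> (\<integral>x. \<phi> x \<partial>P)" "(\<integral>x. \<phi> x \<partial>P) \<le> 1"
    "(\<integral>\<^sup>+x. ennreal (\<phi> x) \<partial>P) = ennreal (\<integral>x. \<phi> x \<partial>P)"
proof -
  interpret prob_space P by fact
  have sp: "space P = space N" using st by (rule sets_eq_imp_space_eq)
  have m: "\<phi> \<in> borel_measurable P" unfolding measurable_cong_sets[OF st refl] by (rule phm)
  show i: "integrable P \<phi>"
    by (rule integrable_const_bound[where B=1]) (use b sp m in auto)
  show "0 \<le> (\<integral>x. \<phi> x \<partial>P)" using b sp by (intro integral_nonneg_AE) auto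
  have "(\<integral>x. \<phi> x \<partial>P) \<le> (\<integral>x. 1 \<partial>P)"
    using b sp i by (intro integral_mono_AE) auto
  then show "(\<integral>x. \<phi> x \<partial>P) \<le> 1" by (simp add: prob_space)
  show "(\<integral>\<^sup>+x. ennreal (\<phi> x) \<partial>P) = ennreal (\<integral>x. \<phi> x \<partial>P)"
    using b sp i by (intro nn_integral_eq_integral) auto
qed

lemma mix_int:
  fixes q :: "nat \<Rightarrow> real"
  assumes qn: "\<And>i. 0 \<le> q i" and qs: "q sums 1"
    and pr: "\<And>i. prob_space (P i)" and st: "\<And>i. sets (P i) = sets N"
    and phm: "\<phi> \<in> borel_measurable N" and b: "\<forall>x\<in>space N. 0 \<le> \<phi> x \<and> \<phi> x \<le> (1::real)"
  shows "(\<lambda>i. q i * (\<integral>x. \<phi> x \<partial>P i)) sums (\<integral>x. \<phi> x \<partial>mixture N q P)"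
proof -
  define B where "B = density (count_space UNIV) (\<lambda>i. ennreal (q i))"
  have mb: "mixture N q P = bind B P" unfolding B_def by (rule mixture_bind[OF qn pr st])
  have spB: "space B = UNIV" by (simp add: B_def)
  have meas: "P \<in> measurable B (subprob_algebra N)"
  proof -
    have "P \<in> measurable (count_space UNIV) (subprob_algebra N)"
      using pr st by (auto simp: space_subprob_algebra prob_space_imp_subprob_space)
    then show ?thesis unfolding B_def by (simp add: measurable_cong_sets)
  qed
  have sbind: "sets (bind B P) = sets N"
    using st spB by (intro sets_bind) auto
  have spbind: "space (bind B P) = space N"
    using sbind by (rule sets_eq_imp_space_eq)
  have summ: "summable (\<lambda>i. q i * (\<integral>x. \<phi> x \<partial>P i))"
  proof (rule summable_comparison_test)
    show "\<exists>N'. \<forall>n\<ge>N'. norm (q n * (\<integral>x. \<phi> x \<partial>P n)) \<le> q n"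
      using comp_int[OF pr st phm b] qn by (auto intro!: mult_right_le_one_le)
    show "summable q" using qs by (rule sums_summable)
  qed
  have nn: "(\<integral>\<^sup>+x. ennreal (\<phi> x) \<partial>bind B P) = ennreal (\<Sum>i. q i * (\<integral>x. \<phi> x \<partial>P i))"
  proof -
    have "(\<integral>\<^sup>+x. ennreal (\<phi> x) \<partial>bind B P) = (\<integral>\<^sup>+i. (\<integral>\<^sup>+x. ennreal (\<phi> x) \<partial>P i) \<partial>B)"
      using phm meas by (intro nn_integral_bind) auto
    also have "\<dots> = (\<integral>\<^sup>+i. ennreal (q i) * (\<integral>\<^sup>+x. ennreal (\<phi> x) \<partial>P i) \<partial>count_space UNIV)"
      unfolding B_def by (subst nn_integral_density) auto
    also have "\<dots> = (\<Sum>i. ennreal (q i) * (\<integral>\<^sup>+x. ennreal (\<phi> x) \<partial>P i))"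
      by (rule nn_integral_count_space_nat)
    also have "\<dots> = (\<Sum>i. ennreal (q i * (\<integral>x. \<phi> x \<partial>P i)))"
      using comp_int(4)[OF pr st phm b] qn by (simp add: ennreal_mult')
    also have "\<dots> = ennreal (\<Sum>i. q i * (\<integral>x. \<phi> x \<partial>P i))"
      using summ comp_int(2)[OF pr st phm b] qn by (intro suminf_ennreal2) auto
    finally show ?thesis .
  qed
  have "(\<integral>x. \<phi> x \<partial>bind B P) = enn2real (\<integral>\<^sup>+x. ennreal (\<phi> x) \<partial>bind B P)"
  proof (rule integral_eq_nn_integral)
    show "\<phi> \<in> borel_measurable (bind B P)" unfolding measurable_cong_sets[OF sbind refl] by (rule phm)
    show "AE x in bind B P. 0 \<le> \<phi> x" using b spbind by (intro AE_I2) auto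
  qed
  also have "\<dots> = (\<Sum>i. q i * (\<integral>x. \<phi> x \<partial>P i))"
  proof -
    have "0 \<le> (\<Sum>i. q i * (\<integral>x. \<phi> x \<partial>P i))"
      using summ comp_int(2)[OF pr st phm b] qn by (intro suminf_nonneg) auto
    then show ?thesis unfolding nn by (rule enn2real_ennreal)
  qed
  finally have e: "(\<integral>x. \<phi> x \<partial>bind B P) = (\<Sum>i. q i * (\<integral>x. \<phi> x \<partial>P i))" .
  show ?thesis unfolding mb e by (rule summable_sums[OF summ])
qed

lemma sets_mix:
  fixes q :: "nat \<Rightarrow> real"
  assumes qn: "\<And>i. 0 \<le> q i" and pr: "\<And>i. prob_space (P i)" and st: "\<And>i. sets (P i) = sets N"
  shows "sets (mixture N q P) = sets N" "space (mixture N q P) = space N"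
proof -
  show s: "sets (mixture N q P) = sets N"
  proof -
    define B where "B = density (count_space UNIV) (\<lambda>i. ennreal (q i))"
    have spB: "space B = UNIV" by (simp add: B_def)
    have "sets (bind B P) = sets N" using st spB by (intro sets_bind) auto
    then show ?thesis unfolding mixture_bind[OF qn pr st] B_def .
  qed
  then show "space (mixture N q P) = space N" by (rule sets_eq_imp_space_eq)
qed

lemma tof_props:
  assumes "is_tradeoff_fun g"
  shows "g 1 = 0" "\<And>x y. x \<in> {0..1} \<Longrightarrow> y \<in> {0..1} \<Longrightarrow> x \<le> y \<Longrightarrow> g y \<le> g x"
    "\<And>x. x \<in> {0..1} \<Longrightarrow> 0 \<le> g x" "\<And>x. x \<in> {0..1} \<Longrightarrow> g x \<le> 1"
    "convex_on {0..1} g"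
proof -
  have A: "\<forall>x\<in>{0..1}. 0 \<le> g x \<and> g x \<le> 1 \<and> g x \<le> 1 - x"
    and B: "\<forall>x\<in>{0..1}. \<forall>y\<in>{0..1}. x \<le> y \<longrightarrow> g y \<le> g x"
    and C: "convex_on {0..1} g"
    using assms unfolding is_tradeoff_fun_def by blast+
  have "(1::real) \<in> {0..1}" by simp
  then have "0 \<le> g 1" "g 1 \<le> 1 - 1" using A by blast+
  then show "g 1 = 0" by simp
  show "\<And>x y. x \<in> {0..1} \<Longrightarrow> y \<in> {0..1} \<Longrightarrow> x \<le> y \<Longrightarrow> g y \<le> g x" using B by blast
  show "\<And>x. x \<in> {0..1} \<Longrightarrow> 0 \<le> g x" using A by blast
  show "\<And>x. x \<in> {0..1} \<Longrightarrow> g x \<le> 1" using A by blast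
  show "convex_on {0..1} g" by (rule C)
qed

lemma chain:
  fixes f :: "nat \<Rightarrow> real \<Rightarrow> real"
  assumes f_mono: "\<And>i \<alpha>. \<alpha> \<in> {0..1} \<Longrightarrow> f i \<alpha> \<le> f (Suc i) \<alpha>"
    and "t \<le> i" and "\<alpha> \<in> {0..1}"
  shows "f t \<alpha> \<le> f i \<alpha>"
  by (induct rule: dec_induct[OF assms(2)]) (auto intro: order_trans f_mono assms(3))

lemma summable_qf:
  fixes q :: "nat \<Rightarrow> real"
  assumes qn: "\<And>i. 0 \<le> q i" and qs: "q sums 1"
    and ft: "\<And>i. is_tradeoff_fun (f i)" and a: "\<And>i. a i \<in> {0..1}"
  shows "summable (\<lambda>i. q i * f i (a i))" "\<And>i. 0 \<le> q i * f i (a i)"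
proof -
  show nn: "\<And>i. 0 \<le> q i * f i (a i)" using qn tof_props(3)[OF ft a] by simp
  show "summable (\<lambda>i. q i * f i (a i))"
  proof (rule summable_comparison_test)
    show "\<exists>N'. \<forall>n\<ge>N'. norm (q n * f n (a n)) \<le> q n"
      using tof_props(3,4)[OF ft a] qn by (auto intro!: exI[of _ 0] mult_right_le_one_le)
    show "summable q" using qs by (rule sums_summable)
  qed
qed

lemma ml_bdd:
  fixes q :: "nat \<Rightarrow> real"
  assumes qn: "\<And>i. 0 \<le> q i" and qs: "q sums 1"
    and ft: "\<And>i. is_tradeoff_fun (f i)"
  shows "bdd_below {(\<Sum>i. q i * f i (a i)) | a.
       (\<forall>i. a i \<in> {0..1}) \<and> (\<Sum>i. q i * a i) = \<alpha>}"
  unfolding bdd_below_def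
proof (intro exI[of _ 0] ballI)
  fix x assume "x \<in> {(\<Sum>i. q i * f i (a i)) | a.
       (\<forall>i. a i \<in> {0..1}) \<and> (\<Sum>i. q i * a i) = \<alpha>}"
  then obtain a where x: "x = (\<Sum>i. q i * f i (a i))" and a: "\<And>i. a i \<in> {0..1}" by blast
  show "0 \<le> x" unfolding x
    by (rule suminf_nonneg[OF summable_qf(1)[OF qn qs ft a] summable_qf(2)[OF qn qs ft a]])
qed

lemma ml_lower:
  fixes q :: "nat \<Rightarrow> real"
  assumes qn: "\<And>i. 0 \<le> q i" and qs: "q sums 1"
    and ft: "\<And>i. is_tradeoff_fun (f i)" and a: "\<And>i. a i \<in> {0..1}"
    and as: "(\<lambda>i. q i * a i) sums \<alpha>'" and le: "\<alpha>' \<le> \<alpha>" and le1: "\<alpha> \<le> 1"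
  shows "mix_lower q f \<alpha> \<le> (\<Sum>i. q i * f i (a i))"
proof -
  have a'1: "\<alpha>' \<le> 1"
  proof -
    have h: "q i * a i \<le> q i" for i using mult_left_le[of "a i" "q i"] a[of i] qn[of i] by simp
    show ?thesis by (rule sums_le[OF h as qs])
  qed
  obtain b where b: "\<And>i. b i \<in> {0..1}" "\<And>i. a i \<le> b i" "(\<lambda>i. q i * b i) sums \<alpha>"
  proof (cases "\<alpha>' = 1")
    case True
    then have "\<alpha> = 1" using le le1 by simp
    then show ?thesis using that[of a] a as True by auto
  next
    case False
    define l where "l = (\<alpha> - \<alpha>') / (1 - \<alpha>')"
    have l01: "0 \<le> l" "l \<le> 1" using False a'1 le le1 by (auto simp: l_def field_simps)
    define b where "b i = a i + l * (1 - a i)" for i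
    have "b i \<in> {0..1}" for i
    proof -
      have "0 \<le> l * (1 - a i)" "l * (1 - a i) \<le> 1 - a i" using l01 a[of i] by (auto intro: mult_left_le_one_le)
      then show ?thesis using a[of i] by (simp add: b_def)
    qed
    moreover have "a i \<le> b i" for i using l01 a[of i] by (simp add: b_def)
    moreover have "(\<lambda>i. q i * b i) sums \<alpha>"
    proof -
      have "(\<lambda>i. q i * a i + l * (q i - q i * a i)) sums (\<alpha>' + l * (1 - \<alpha>'))"
        by (intro sums_add sums_mult sums_diff as qs)
      moreover have "\<alpha>' + l * (1 - \<alpha>') = \<alpha>" using False a'1 by (simp add: l_def)
      moreover have "(\<lambda>i. q i * a i + l * (q i - q i * a i)) = (\<lambda>i. q i * b i)"
        by (auto simp: b_def algebra_simps)
      ultimately show ?thesis by simp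
    qed
    ultimately show ?thesis using that by blast
  qed
  have "mix_lower q f \<alpha> \<le> (\<Sum>i. q i * f i (b i))"
    unfolding mix_lower_def
    by (rule cInf_lower[OF _ ml_bdd[OF qn qs ft]]) (use b sums_unique in blast)
  also have "\<dots> \<le> (\<Sum>i. q i * f i (a i))"
  proof (rule suminf_le)
    show "q n * f n (b n) \<le> q n * f n (a n)" for n
      using tof_props(2)[OF ft a[of n] b(1)[of n] b(2)[of n]] qn[of n] by (rule mult_left_mono)
  qed (use summable_qf[OF qn qs ft] a b in auto)
  finally show ?thesis .
qed

lemma part2:
  fixes q :: "nat \<Rightarrow> real" and f :: "nat \<Rightarrow> real \<Rightarrow> real"
  assumes qn: "\<And>i. 0 \<le> q i" and qs: "q sums 1"
    and ft: "\<And>i. is_tradeoff_fun (f i)"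
    and f_mono: "\<And>i \<alpha>. \<alpha> \<in> {0..1} \<Longrightarrow> f i \<alpha> \<le> f (Suc i) \<alpha>"
    and \<alpha>0: "0 \<le> \<alpha>" and \<alpha>1: "\<alpha> \<le> 1"
    and a: "\<And>i. a i \<in> {0..1}" and as: "(\<Sum>i. q i * a i) = \<alpha>"
  shows "f t (min 1 (\<alpha> + (\<Sum>i<t. q i))) \<le> (\<Sum>i. q i * f i (a i))"
proof -
  define p where "p = (\<Sum>i<t. q i)"
  define S where "S = (\<Sum>i. q i * f i (a i))"
  have sumS: "summable (\<lambda>i. q i * f i (a i))" and nnS: "\<And>i. 0 \<le> q i * f i (a i)"
    using summable_qf[OF qn qs ft a] by auto
  have S0: "0 \<le> S" unfolding S_def by (rule suminf_nonneg[OF sumS nnS])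
  have p0: "0 \<le> p" unfolding p_def by (rule sum_nonneg) (use qn in auto)
  have nnqa: "0 \<le> q i * a i" for i using qn[of i] a[of i] by simp
  have sumqa: "summable (\<lambda>i. q i * a i)"
  proof (rule summable_comparison_test)
    have "q i * a i \<le> q i" for i using mult_left_le[of "a i" "q i"] a[of i] qn[of i] by simp
    then show "\<exists>N'. \<forall>n\<ge>N'. norm (q n * a n) \<le> q n" using nnqa by (intro exI[of _ 0]) simp
    show "summable q" using qs by (rule sums_summable)
  qed
  have q1: "suminf q = 1" using qs by (rule sums_unique[symmetric])
  show ?thesis
  proof (cases "1 \<le> \<alpha> + p")
    case True
    then have "min 1 (\<alpha> + p) = 1" by simp
    then show ?thesis using tof_props(1)[OF ft] S0 unfolding S_def p_def by simp
  next
    case False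
    define c where "c = \<alpha> + p"
    have c01: "c \<in> {0..1}" using False \<alpha>0 p0 by (simp add: c_def)
    have mc: "min 1 (\<alpha> + p) = c" using False by (simp add: c_def)
    have "f t c \<le> S"
    proof (rule field_le_epsilon)
      fix e :: real assume e: "0 < e"
      have ev1: "eventually (\<lambda>n. 1 - e < (\<Sum>i<n. q i)) sequentially"
        using qs unfolding sums_def by (rule order_tendstoD(1)) (use e in simp)
      have ev2: "eventually (\<lambda>n. t \<le> n) sequentially" by (rule eventually_ge_at_top)
      obtain n where n1: "1 - e < (\<Sum>i<n. q i)" and n2: "t \<le> n"
        using eventually_happens'[OF _ eventually_conj[OF ev1 ev2]] by auto
      define r where "r = 1 - (\<Sum>i<n. q i)"
      have "(\<Sum>i<n. q i) \<le> suminf q"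
        by (rule sum_le_suminf) (use qs qn in \<open>auto intro: sums_summable\<close>)
      then have r0: "0 \<le> r" using q1 by (simp add: r_def)
      have re: "r < e" using n1 by (simp add: r_def)
      define w where "w j = (if j < n then q j else r)" for j
      define y where "y j = (if j < t then 1 else if j < n then a j else 0)" for j
      have y01: "y j \<in> {0..1}" for j using a[of j] by (auto simp: y_def)
      have w0: "0 \<le> w j" for j using qn[of j] r0 by (auto simp: w_def)
      have wsum: "(\<Sum>j<Suc n. w j) = 1"
      proof -
        have "(\<Sum>j<n. w j) = (\<Sum>j<n. q j)" by (rule sum.cong) (auto simp: w_def)
        then show ?thesis by (simp add: w_def r_def)
      qed
      define X where "X = (\<Sum>j<n. q j * y j)"
      have conv: "f t (\<Sum>j<Suc n. w j * y j) \<le> (\<Sum>j<Suc n. w j * f t (y j))"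
        using convex_on_sum[OF finite_lessThan _ tof_props(5)[OF ft] wsum, of y] w0 y01 by auto
      have eqX: "(\<Sum>j<Suc n. w j * y j) = X"
      proof -
        have "(\<Sum>j<n. w j * y j) = X" unfolding X_def by (rule sum.cong) (auto simp: w_def)
        moreover have "y n = 0" using n2 by (simp add: y_def)
        ultimately show ?thesis by simp
      qed
      have X0: "0 \<le> X" unfolding X_def using qn y01 by (intro sum_nonneg) (simp add: y01)
      have Xc: "X \<le> c"
      proof -
        have "X \<le> (\<Sum>j<n. q j * (if j < t then 1 else 0) + q j * a j)"
          unfolding X_def
        proof (rule sum_mono)
          fix j assume "j \<in> {..<n}"
          show "q j * y j \<le> q j * (if j < t then 1 else 0) + q j * a j"
            using qn[of j] a[of j] by (auto simp: y_def)
        qed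
        also have "\<dots> = (\<Sum>j<n. (if j < t then q j else 0)) + (\<Sum>j<n. q j * a j)"
          by (subst sum.distrib[symmetric]) (rule sum.cong, auto)
        also have "(\<Sum>j<n. (if j < t then q j else 0)) = p"
        proof -
          have "(\<Sum>j<n. (if j < t then q j else 0)) = sum q {j\<in>{..<n}. j < t}"
            by (rule sum.inter_filter[symmetric]) simp
          also have "{j\<in>{..<n}. j < t} = {..<t}" using n2 by auto
          finally show ?thesis by (simp add: p_def)
        qed
        also have "(\<Sum>j<n. q j * a j) \<le> \<alpha>"
          unfolding as[symmetric] by (rule sum_le_suminf) (use sumqa nnqa in auto)
        finally show ?thesis by (simp add: c_def)
      qed
      have "f t c \<le> f t X" using tof_props(2)[OF ft, of X c] X0 Xc c01 by auto
      also have "\<dots> \<le> (\<Sum>j<Suc n. w j * f t (y j))" using conv eqX by simp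
      also have "\<dots> = (\<Sum>j<n. q j * f t (y j)) + r * f t 0"
      proof -
        have "(\<Sum>j<n. w j * f t (y j)) = (\<Sum>j<n. q j * f t (y j))" by (rule sum.cong) (auto simp: w_def)
        moreover have "y n = 0" "w n = r" using n2 by (simp_all add: y_def w_def)
        ultimately show ?thesis by simp
      qed
      also have "(\<Sum>j<n. q j * f t (y j)) \<le> (\<Sum>j<n. q j * f j (a j))"
      proof (rule sum_mono)
        fix j assume j: "j \<in> {..<n}"
        show "q j * f t (y j) \<le> q j * f j (a j)"
        proof (cases "j < t")
          case True
          then show ?thesis using tof_props(1)[OF ft] nnS[of j] by (simp add: y_def)
        next
          case False
          then have "f t (a j) \<le> f j (a j)" using chain[of f t j "a j", OF f_mono] a[of j] by simp
          then show ?thesis using False j qn[of j] by (simp add: y_def mult_left_mono)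
        qed
      qed
      also have "(\<Sum>j<n. q j * f j (a j)) \<le> S"
        unfolding S_def by (rule sum_le_suminf) (use sumS nnS in auto)
      also have "r * f t 0 \<le> e"
      proof -
        have "f t 0 \<le> 1" "0 \<le> f t 0" using tof_props(3,4)[OF ft, of 0] by auto
        then have "r * f t 0 \<le> r" using r0 by (simp add: mult_left_le)
        then show ?thesis using re by simp
      qed
      finally show "f t c \<le> S + e" by simp
    qed
    then show ?thesis unfolding S_def mc[unfolded p_def] .
  qed
qed

theorem lemma2:
  fixes q :: "nat \<Rightarrow> real"
    and M :: "nat \<Rightarrow> 'd \<Rightarrow> 'a measure"
    and N :: "'a measure"
    and d d' :: 'd
    and f :: "nat \<Rightarrow> real \<Rightarrow> real"
    and t :: nat
  assumes q_nonneg: "\<And>i. 0 \<le> q i"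
    and q_sum: "q sums 1"
    and prob_d: "\<And>i. prob_space (M i d)"
    and prob_d': "\<And>i. prob_space (M i d')"
    and sets_d: "\<And>i. sets (M i d) = sets N"
    and sets_d': "\<And>i. sets (M i d') = sets N"
    and f_tradeoff: "\<And>i. is_tradeoff_fun (f i)"
    and f_bound: "\<And>i \<alpha>. \<alpha> \<in> {0..1} \<Longrightarrow> f i \<alpha> \<le> tradeoff (M i d) (M i d') \<alpha>"
    and f_mono: "\<And>i \<alpha>. \<alpha> \<in> {0..1} \<Longrightarrow> f i \<alpha> \<le> f (Suc i) \<alpha>"
  shows "\<forall>\<alpha>\<in>{0..1}.
           mix_lower q f \<alpha> \<le> tradeoff (mixture N q (\<lambda>i. M i d)) (mixture N q (\<lambda>i. M i d')) \<alpha>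
         \<and> f t (min 1 (\<alpha> + (\<Sum>i<t. q i))) \<le> mix_lower q f \<alpha>"
proof (intro ballI conjI)
  fix \<alpha> :: real assume \<alpha>: "\<alpha> \<in> {0..1}"
  have \<alpha>0: "0 \<le> \<alpha>" and \<alpha>1: "\<alpha> \<le> 1" using \<alpha> by auto
  define P where "P = mixture N q (\<lambda>i. M i d)"
  define Q where "Q = mixture N q (\<lambda>i. M i d')"
  have sP: "sets P = sets N" and spP: "space P = space N"
    unfolding P_def using sets_mix[of q "\<lambda>i. M i d" N, OF q_nonneg prob_d sets_d] by auto
  have spd: "space (M i d) = space N" for i using sets_d[of i] by (rule sets_eq_imp_space_eq)
  have tr_ge: "1 - (\<integral>x. \<phi> x \<partial>M i d') \<ge> tradeoff (M i d) (M i d') (\<integral>x. \<phi> x \<partial>M i d)"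
    if \<phi>N: "\<phi> \<in> borel_measurable N" and \<phi>b: "\<forall>x\<in>space N. 0 \<le> \<phi> x \<and> \<phi> x \<le> 1" for \<phi> i
  proof -
    let ?X = "(\<lambda>\<phi>::'a\<Rightarrow>real. 1 - (\<integral>x. \<phi> x \<partial>M i d')) `
     {\<theta> \<in> borel_measurable (M i d). (\<forall>x\<in>space (M i d). 0 \<le> \<theta> x \<and> \<theta> x \<le> 1) \<and> (\<integral>x. \<theta> x \<partial>M i d) \<le> (\<integral>x. \<phi> x \<partial>M i d)}"
    have "\<phi> \<in> borel_measurable (M i d)" unfolding measurable_cong_sets[OF sets_d refl] by (rule \<phi>N)
    then have mem: "1 - (\<integral>x. \<phi> x \<partial>M i d') \<in> ?X"
      using \<phi>b spd[of i] by auto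
    have bdd: "bdd_below ?X"
      unfolding bdd_below_def
    proof (intro exI[of _ 0] ballI)
      fix v :: real assume "v \<in> (\<lambda>\<phi>::'a\<Rightarrow>real. 1 - (\<integral>x. \<phi> x \<partial>M i d')) `
        {\<theta> \<in> borel_measurable (M i d). (\<forall>x\<in>space (M i d). 0 \<le> \<theta> x \<and> \<theta> x \<le> 1) \<and> (\<integral>x. \<theta> x \<partial>M i d) \<le> (\<integral>x. \<phi> x \<partial>M i d)}"
      then obtain \<psi> where \<psi>m: "\<psi> \<in> borel_measurable (M i d)" and \<psi>b: "\<forall>x\<in>space (M i d). 0 \<le> \<psi> x \<and> \<psi> x \<le> 1"
        and v: "v = 1 - (\<integral>x. \<psi> x \<partial>M i d')" by blast
      have "\<psi> \<in> borel_measurable N" using \<psi>m unfolding measurable_cong_sets[OF sets_d refl] .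
      moreover have "\<forall>x\<in>space N. 0 \<le> \<psi> x \<and> \<psi> x \<le> 1" using \<psi>b spd[of i] by simp
      ultimately have "(\<integral>x. \<psi> x \<partial>M i d') \<le> 1" using comp_int(3)[OF prob_d'[of i] sets_d'[of i]] by blast
      then show "0 \<le> v" by (simp add: v)
    qed
    show ?thesis unfolding tradeoff_def by (rule cInf_lower[OF mem bdd])
  qed
  show "mix_lower q f \<alpha> \<le> tradeoff (mixture N q (\<lambda>i. M i d)) (mixture N q (\<lambda>i. M i d')) \<alpha>"
    unfolding P_def[symmetric] Q_def[symmetric] tradeoff_def
  proof (rule cInf_greatest)
    have "(\<lambda>_. 0::real) \<in> {\<phi> \<in> borel_measurable P. (\<forall>x\<in>space P. 0 \<le> \<phi> x \<and> \<phi> x \<le> 1) \<and> (\<integral>x. \<phi> x \<partial>P) \<le> \<alpha>}"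
      using \<alpha>0 by simp
    then show "(\<lambda>\<phi>::'a\<Rightarrow>real. 1 - (\<integral>x. \<phi> x \<partial>Q)) ` {\<phi> \<in> borel_measurable P. (\<forall>x\<in>space P. 0 \<le> \<phi> x \<and> \<phi> x \<le> 1) \<and> (\<integral>x. \<phi> x \<partial>P) \<le> \<alpha>} \<noteq> {}"
      by blast
  next
    fix v :: real assume "v \<in> (\<lambda>\<phi>::'a\<Rightarrow>real. 1 - (\<integral>x. \<phi> x \<partial>Q)) ` {\<phi> \<in> borel_measurable P. (\<forall>x\<in>space P. 0 \<le> \<phi> x \<and> \<phi> x \<le> 1) \<and> (\<integral>x. \<phi> x \<partial>P) \<le> \<alpha>}"
    then obtain \<phi> where \<phi>m: "\<phi> \<in> borel_measurable P" and \<phi>b': "\<forall>x\<in>space P. 0 \<le> \<phi> x \<and> \<phi> x \<le> 1"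
      and \<phi>\<alpha>: "(\<integral>x. \<phi> x \<partial>P) \<le> \<alpha>" and v: "v = 1 - (\<integral>x. \<phi> x \<partial>Q)" by blast
    have \<phi>N: "\<phi> \<in> borel_measurable N" using \<phi>m unfolding measurable_cong_sets[OF sP refl] .
    have \<phi>b: "\<forall>x\<in>space N. 0 \<le> \<phi> x \<and> \<phi> x \<le> 1" using \<phi>b' spP by simp
    define A where "A i = (\<integral>x. \<phi> x \<partial>M i d)" for i
    define B where "B i = (\<integral>x. \<phi> x \<partial>M i d')" for i
    have sA: "(\<lambda>i. q i * A i) sums (\<integral>x. \<phi> x \<partial>P)"
      unfolding A_def P_def by (rule mix_int[of q "\<lambda>i. M i d" N, OF q_nonneg q_sum prob_d sets_d \<phi>N \<phi>b])
    have sB: "(\<lambda>i. q i * B i) sums (\<integral>x. \<phi> x \<partial>Q)"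
      unfolding B_def Q_def by (rule mix_int[of q "\<lambda>i. M i d'" N, OF q_nonneg q_sum prob_d' sets_d' \<phi>N \<phi>b])
    have A01: "A i \<in> {0..1}" for i
      using comp_int(2,3)[OF prob_d sets_d \<phi>N \<phi>b, of i] by (simp add: A_def)
    have "mix_lower q f \<alpha> \<le> (\<Sum>i. q i * f i (A i))"
      by (rule ml_lower[OF q_nonneg q_sum f_tradeoff A01 sA \<phi>\<alpha> \<alpha>1])
    also have "\<dots> \<le> 1 - (\<integral>x. \<phi> x \<partial>Q)"
    proof (rule sums_le)
      show "(\<lambda>i. q i * f i (A i)) sums (\<Sum>i. q i * f i (A i))"
        by (rule summable_sums[OF summable_qf(1)[OF q_nonneg q_sum f_tradeoff A01]])
      have "(\<lambda>i. q i - q i * B i) sums (1 - (\<integral>x. \<phi> x \<partial>Q))" by (rule sums_diff[OF q_sum sB])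
      then show "(\<lambda>i. q i * (1 - B i)) sums (1 - (\<integral>x. \<phi> x \<partial>Q))" by (simp add: right_diff_distrib)
      fix i
      have "f i (A i) \<le> tradeoff (M i d) (M i d') (A i)" by (rule f_bound[OF A01])
      also have "\<dots> \<le> 1 - B i" unfolding A_def B_def by (rule tr_ge[OF \<phi>N \<phi>b])
      finally show "q i * f i (A i) \<le> q i * (1 - B i)" by (rule mult_left_mono[OF _ q_nonneg])
    qed
    finally show "mix_lower q f \<alpha> \<le> v" by (simp add: v)
  qed
  show "f t (min 1 (\<alpha> + (\<Sum>i<t. q i))) \<le> mix_lower q f \<alpha>"
    unfolding mix_lower_def
  proof (rule cInf_greatest)
    have "(\<lambda>i. q i * \<alpha>) sums (1 * \<alpha>)" by (rule sums_mult2[OF q_sum])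
    then have "(\<Sum>i. q i * (\<lambda>_. \<alpha>) i) = \<alpha>" by (simp add: sums_unique[symmetric])
    then have "(\<Sum>i. q i * f i ((\<lambda>_. \<alpha>) i)) \<in> {(\<Sum>i. q i * f i (a i)) | a.
       (\<forall>i. a i \<in> {0..1}) \<and> (\<Sum>i. q i * a i) = \<alpha>}" using \<alpha> by (intro CollectI exI[of _ "\<lambda>_. \<alpha>"]) auto
    then show "{(\<Sum>i. q i * f i (a i)) | a. (\<forall>i. a i \<in> {0..1}) \<and> (\<Sum>i. q i * a i) = \<alpha>} \<noteq> {}" by blast
  next
    fix v :: real assume "v \<in> {(\<Sum>i. q i * f i (a i)) | a. (\<forall>i. a i \<in> {0..1}) \<and> (\<Sum>i. q i * a i) = \<alpha>}"
    then obtain a where v: "v = (\<Sum>i. q i * f i (a i))" and a: "\<And>i. a i \<in> {0..1}" and as: "(\<Sum>i. q i * a i) = \<alpha>"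
      by blast
    show "f t (min 1 (\<alpha> + (\<Sum>i<t. q i))) \<le> v"
      unfolding v by (rule part2[of q f \<alpha> a t, OF q_nonneg q_sum f_tradeoff f_mono \<alpha>0 \<alpha>1 a as])
  qed
qed

end
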